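(* Let $M\ge 0$, $k\ge 1$, $m\ge 0$ be integers. For $l\ge 0$ let $\mathcal{P}_l(k,m)$ be the set of partitions $(\lambda_1,\dots,\lambda_l)$ into exactly $l$ parts with $\lambda_l\ge k$ and $\lambda_i-\lambda_{i+1}\ge m$ for $1\le i\le l-1$ ($\mathcal{P}_0(k,m)$ contains only the empty partition), and let $\mathcal{P}_{\le M}(k,m)=\bigcup_{l=0}^M\mathcal{P}_l(k,m)$. For a partition $\pi=(\lambda_1,\dots,\lambda_l)$ with $l\ge1$ parts define $\omega_{k,m}(\pi):=(\lambda_l+1-k)\prod_{i=1}^{l-1}(\lambda_i-\lambda_{i+1}+1-m)$, and let $\omega_{k,m}$ of the empty partition be $1$. Then \[\sum_{\pi\in\mathcal{P}_{\le M}(k,m)}\omega_{k,m}(\pi)\,q^{|\pi|}=\sum_{i=0}^{M}\frac{q^{m\binom{i}{2}+ki}}{(q;q)_i^2}.\]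
   Context: A partition is a finite weakly decreasing sequence of positive integers; $|\pi|$ is the sum of its parts. $(a;q)_L=\prod_{n=0}^{L-1}(1-aq^n)$. *)

theory Defs
  imports "HOL-Computational_Algebra.Formal_Power_Series"
begin

definition is_partition :: "nat list \<Rightarrow> bool" where
  "is_partition p \<longleftrightarrow> sorted_wrt (\<ge>) p \<and> (\<forall>x\<in>set p. 0 < x)"

definition P_set :: "nat \<Rightarrow> nat \<Rightarrow> nat \<Rightarrow> nat list set" where
  "P_set l k m = {p. is_partition p \<and> length p = l \<and>
      (p \<noteq> [] \<longrightarrow> k \<le> last p) \<and>
      (\<forall>i. Suc i < length p \<longrightarrow> p ! Suc i + m \<le> p ! i)}"

definition P_le :: "nat \<Rightarrow> nat \<Rightarrow> nat \<Rightarrow> nat list set" where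
  "P_le M k m = (\<Union>l\<in>{0..M}. P_set l k m)"

definition omega :: "nat \<Rightarrow> nat \<Rightarrow> nat list \<Rightarrow> int" where
  "omega k m p = (if p = [] then 1 else
     (int (last p) + 1 - int k) *
     (\<Prod>i<length p - 1. int (p ! i) - int (p ! Suc i) + 1 - int m))"

definition qpoch :: "nat \<Rightarrow> 'a::comm_ring_1 fps" where
  "qpoch L = (\<Prod>n<L. 1 - fps_X ^ (n + 1))"

end

theory Submission
  imports Defs
begin


definition Q :: "nat \<Rightarrow> nat \<Rightarrow> nat \<Rightarrow> nat list set" where
  "Q l k m = {p. length p = l \<and> (p \<noteq> [] \<longrightarrow> k \<le> last p) \<and> sorted_wrt (\<lambda>x y. y + m \<le> x) p}"

lemma transpR: "transp (\<lambda>x y::nat. y + m \<le> x)"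
  by (auto simp: transp_def)

lemma sorted_last_le:
  assumes "sorted_wrt (\<lambda>x y::nat. y + m \<le> x) p" "p \<noteq> []" "y \<in> set p"
  shows "last p \<le> y"
proof -
  have p: "p = butlast p @ [last p]" using assms(2) by simp
  have "sorted_wrt (\<lambda>x y::nat. y + m \<le> x) (butlast p @ [last p])" using assms(1) p by simp
  hence "\<forall>x\<in>set (butlast p). last p + m \<le> x" by (simp add: sorted_wrt_append)
  moreover have "y \<in> set (butlast p) \<or> y = last p" using assms(3) p
    by (metis Un_iff empty_iff empty_set set_ConsD set_append)
  ultimately show ?thesis by auto
qed

lemma P_set_eq: assumes "1 \<le> k" shows "P_set l k m = Q l k m"
proof -
  have "p \<in> P_set l k m \<longleftrightarrow> p \<in> Q l k m" for p
  proof -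
    have e: "sorted_wrt (\<lambda>x y. y + m \<le> x) p \<longleftrightarrow> (\<forall>i. Suc i < length p \<longrightarrow> p ! Suc i + m \<le> p ! i)"
      by (subst sorted_wrt_iff_nth_Suc_transp[OF transpR]) simp
    have "is_partition p" if "sorted_wrt (\<lambda>x y. y + m \<le> x) p" "p \<noteq> [] \<longrightarrow> k \<le> last p"
    proof -
      have "sorted_wrt (\<ge>) p" by (rule sorted_wrt_mono_rel[OF _ that(1)]) auto
      moreover have "\<forall>x\<in>set p. 0 < x" using sorted_last_le[OF that(1)] that(2) assms
        by fastforce
      ultimately show ?thesis by (simp add: is_partition_def)
    qed
    thus ?thesis unfolding P_set_def Q_def using e by auto
  qed
  thus ?thesis by blast
qed

lemma finite_Qn: "finite {p\<in>Q l k m. sum_list p = n}"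
proof (rule finite_subset)
  show "{p\<in>Q l k m. sum_list p = n} \<subseteq> {p. set p \<subseteq> {0..n} \<and> length p = l}"
    by (auto simp: Q_def member_le_sum_list)
  show "finite {p. set p \<subseteq> {0..n} \<and> length p = l}"
    by (rule finite_lists_length_eq) simp
qed

lemma sum_list_shift: "sum_list (map (\<lambda>x. x + c) xs) = sum_list xs + length xs * (c::nat)"
  by (induction xs) auto

lemma omega_shift:
  fixes \<mu> :: "nat list"
  shows "omega k m (map (\<lambda>x. x + c) \<mu> @ [c]) = (int c + 1 - int k) * omega m m \<mu>"
proof (cases "\<mu> = []")
  case True then show ?thesis by (simp add: omega_def)
next
  case False
  then obtain l where l: "length \<mu> = Suc l" by (cases \<mu>) auto
  let ?p = "map (\<lambda>x. x + c) \<mu> @ [c]"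
  have "(\<Prod>i<length ?p - 1. int (?p ! i) - int (?p ! Suc i) + 1 - int m)
      = (\<Prod>i<Suc l. int (?p ! i) - int (?p ! Suc i) + 1 - int m)" using l by simp
  also have "\<dots> = (\<Prod>i<l. int (?p ! i) - int (?p ! Suc i) + 1 - int m) *
        (int (?p ! l) - int (?p ! Suc l) + 1 - int m)" by simp
  also have "(\<Prod>i<l. int (?p ! i) - int (?p ! Suc i) + 1 - int m)
       = (\<Prod>i<l. int (\<mu> ! i) - int (\<mu> ! Suc i) + 1 - int m)"
    by (rule prod.cong) (auto simp: nth_append l)
  also have "int (?p ! l) - int (?p ! Suc l) + 1 - int m = int (last \<mu>) + 1 - int m"
    using l False by (simp add: nth_append last_conv_nth)
  finally show ?thesis using False l by (simp add: omega_def)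
qed



lemma shift_in_Q:
  assumes "\<mu> \<in> Q l m m" "k \<le> c"
  shows "map (\<lambda>x. x + c) \<mu> @ [c] \<in> Q (Suc l) k m"
proof -
  have s: "sorted_wrt (\<lambda>x y. y + m \<le> x) \<mu>" and len: "length \<mu> = l"
    and lst: "\<mu> \<noteq> [] \<longrightarrow> m \<le> last \<mu>" using assms by (auto simp: Q_def)
  have "\<forall>y\<in>set \<mu>. m \<le> y" using sorted_last_le[OF s] lst by fastforce
  moreover have "sorted_wrt (\<lambda>x y. y + m \<le> x) (map (\<lambda>x. x + c) \<mu>)"
    using s by (simp add: sorted_wrt_map)
  ultimately show ?thesis using len assms(2) by (auto simp: Q_def sorted_wrt_append)
qed

lemma unshift:
  assumes "p \<in> Q (Suc l) k m"
  shows "map (\<lambda>x. x - last p) (butlast p) \<in> Q l m m \<and> k \<le> last p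
     \<and> p = map (\<lambda>x. x + last p) (map (\<lambda>x. x - last p) (butlast p)) @ [last p]"
proof -
  have ne: "p \<noteq> []" and len: "length p = Suc l" and kl: "k \<le> last p"
    and s: "sorted_wrt (\<lambda>x y. y + m \<le> x) p" using assms by (auto simp: Q_def)
  have p: "p = butlast p @ [last p]" using ne by simp
  with s have "sorted_wrt (\<lambda>x y. y + m \<le> x) (butlast p @ [last p])" by simp
  hence sb: "sorted_wrt (\<lambda>x y. y + m \<le> x) (butlast p)" and
    ge: "\<forall>x\<in>set (butlast p). last p + m \<le> x" by (auto simp: sorted_wrt_append)
  have eq: "map (\<lambda>x. x + last p) (map (\<lambda>x. x - last p) (butlast p)) = butlast p"
    unfolding map_map by (rule map_idI) (use ge in auto)
  have s2: "sorted_wrt (\<lambda>x y. y + m \<le> x) (map (\<lambda>x. x - last p) (butlast p))"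
    unfolding sorted_wrt_map by (rule sorted_wrt_mono_rel[OF _ sb]) (use ge in auto)
  have "butlast p \<noteq> [] \<longrightarrow> m \<le> last (butlast p) - last p"
    using ge by (metis add_diff_cancel_left' diff_le_mono last_in_set)
  hence "map (\<lambda>x. x - last p) (butlast p) \<noteq> [] \<longrightarrow> m \<le> last (map (\<lambda>x. x - last p) (butlast p))"
    by (simp add: last_map)
  then show ?thesis using s2 len kl eq p by (auto simp: Q_def)
qed

lemma key_sum:
  "(\<Sum>p\<in>{p\<in>Q (Suc l) k m. sum_list p = n}. omega k m p)
   = (\<Sum>c\<in>{c. k \<le> c \<and> Suc l * c \<le> n}. (int c + 1 - int k) *
        (\<Sum>\<mu>\<in>{\<mu>\<in>Q l m m. sum_list \<mu> = n - Suc l * c}. omega m m \<mu>))"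
proof -
  let ?C = "{c. k \<le> c \<and> Suc l * c \<le> n}"
  let ?T = "\<lambda>c. {\<mu>\<in>Q l m m. sum_list \<mu> = n - Suc l * c}"
  have "?C \<subseteq> {..n}" by auto
  hence finC: "finite ?C" using finite_subset by blast
  have "(\<Sum>c\<in>?C. (int c + 1 - int k) * (\<Sum>\<mu>\<in>?T c. omega m m \<mu>))
      = (\<Sum>(c,\<mu>)\<in>Sigma ?C ?T. (int c + 1 - int k) * omega m m \<mu>)"
    by (subst sum.Sigma[OF finC, symmetric]) (auto simp: finite_Qn sum_distrib_left)
  also have "\<dots> = (\<Sum>p\<in>{p\<in>Q (Suc l) k m. sum_list p = n}. omega k m p)"
  proof (rule sum.reindex_bij_witness[where j = "\<lambda>(c,\<mu>). map (\<lambda>x. x + c) \<mu> @ [c]"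
        and i = "\<lambda>p. (last p, map (\<lambda>x. x - last p) (butlast p))"])
    fix a assume "a \<in> Sigma ?C ?T"
    then obtain c \<mu> where a: "a = (c,\<mu>)" "k \<le> c" "Suc l * c \<le> n" "\<mu> \<in> Q l m m"
      "sum_list \<mu> = n - Suc l * c" by auto
    have len: "length \<mu> = l" using a(4) by (simp add: Q_def)
    show "(case (case a of (c, \<mu>) \<Rightarrow> map (\<lambda>x. x + c) \<mu> @ [c]) of
            p \<Rightarrow> (last p, map (\<lambda>x. x - last p) (butlast p))) = a"
      using a(1) by (simp add: comp_def)
    show "(case a of (c, \<mu>) \<Rightarrow> map (\<lambda>x. x + c) \<mu> @ [c]) \<in> {p \<in> Q (Suc l) k m. sum_list p = n}"
    proof -
      have "sum_list (map (\<lambda>x. x + c) \<mu> @ [c]) = sum_list \<mu> + l * c + c"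
        using len by (simp add: sum_list_shift)
      also have "\<dots> = n" using a by simp
      finally show ?thesis using a shift_in_Q[OF a(4) a(2)] by simp
    qed
  next
    fix b assume b: "b \<in> {p \<in> Q (Suc l) k m. sum_list p = n}"
    note u = unshift[of b l k m]
    show "(case (last b, map (\<lambda>x. x - last b) (butlast b)) of (c, \<mu>) \<Rightarrow> map (\<lambda>x. x + c) \<mu> @ [c]) = b"
      using u b by simp
    have len: "length (map (\<lambda>x. x - last b) (butlast b)) = l" using b by (simp add: Q_def)
    have "sum_list b = sum_list (map (\<lambda>x. x - last b) (butlast b)) + Suc l * last b"
    proof -
      have "sum_list b = sum_list (map (\<lambda>x. x + last b) (map (\<lambda>x. x - last b) (butlast b)) @ [last b])"
        using u b by (metis (no_types, lifting) mem_Collect_eq)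
      also have "\<dots> = sum_list (map (\<lambda>x. x - last b) (butlast b)) + l * last b + last b"
        by (simp only: sum_list_append sum_list_shift len) simp
      finally show ?thesis by simp
    qed
    then show "(last b, map (\<lambda>x. x - last b) (butlast b)) \<in> Sigma ?C ?T"
      using u b by auto
  next
    fix a assume "a \<in> Sigma ?C ?T"
    then obtain c \<mu> where a: "a = (c,\<mu>)" by auto
    show "omega k m (case a of (c, \<mu>) \<Rightarrow> map (\<lambda>x. x + c) \<mu> @ [c]) =
          (case a of (c, \<mu>) \<Rightarrow> (int c + 1 - int k) * omega m m \<mu>)"
      using a by (simp add: omega_shift)
  qed
  finally show ?thesis by simp
qed


unbundle fps_syntax


definition G :: "nat \<Rightarrow> nat \<Rightarrow> nat \<Rightarrow> rat fps" where
  "G m l k = Abs_fps (\<lambda>n. of_int (\<Sum>p\<in>{p\<in>Q l k m. sum_list p = n}. omega k m p))"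

definition E :: "nat \<Rightarrow> nat \<Rightarrow> rat fps" where
  "E r k = Abs_fps (\<lambda>j. if r dvd j \<and> r * k \<le> j then of_nat (j div r + 1 - k) else 0)"

lemma E_mult:
  assumes r: "0 < r"
  shows "(E r k * H) $ n = (\<Sum>c\<in>{c. k \<le> c \<and> r * c \<le> n}. of_nat (c + 1 - k) * H $ (n - r * c))"
proof -
  let ?C = "{c. k \<le> c \<and> r * c \<le> n}"
  have inj: "inj_on (\<lambda>c. r * c) ?C" using r by (auto simp: inj_on_def)
  have "(\<Sum>c\<in>?C. of_nat (c + 1 - k) * H $ (n - r * c)) = (\<Sum>c\<in>?C. E r k $ (r * c) * H $ (n - r * c))"
    by (rule sum.cong) (use r in \<open>auto simp: E_def\<close>)
  also have "\<dots> = (\<Sum>i\<in>(\<lambda>c. r * c) ` ?C. E r k $ i * H $ (n - i))"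
    by (subst sum.reindex[OF inj]) simp
  also have "\<dots> = (\<Sum>i=0..n. E r k $ i * H $ (n - i))"
  proof (rule sum.mono_neutral_left)
    show "(\<lambda>c. r * c) ` ?C \<subseteq> {0..n}" by auto
    show "\<forall>i\<in>{0..n} - (\<lambda>c. r * c) ` ?C. E r k $ i * H $ (n - i) = 0"
    proof
      fix i assume i: "i \<in> {0..n} - (\<lambda>c. r * c) ` ?C"
      show "E r k $ i * H $ (n - i) = 0"
      proof (cases "r dvd i \<and> r * k \<le> i")
        case True
        then obtain c where c: "i = r * c" by blast
        with True r have "k \<le> c" by simp
        with c i show ?thesis by auto
      next
        case False then show ?thesis by (auto simp: E_def)
      qed
    qed
  qed simp
  finally show ?thesis by (simp add: fps_mult_nth)
qed

lemma G_Suc: "G m (Suc l) k = E (Suc l) k * G m l m"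
proof (rule fps_ext)
  fix n
  have "G m (Suc l) k $ n = of_int (\<Sum>c\<in>{c. k \<le> c \<and> Suc l * c \<le> n}. (int c + 1 - int k) *
        (\<Sum>\<mu>\<in>{\<mu>\<in>Q l m m. sum_list \<mu> = n - Suc l * c}. omega m m \<mu>))"
    unfolding G_def by (simp only: fps_nth_Abs_fps key_sum)
  also have "\<dots> = (\<Sum>c\<in>{c. k \<le> c \<and> Suc l * c \<le> n}. of_nat (c + 1 - k) * G m l m $ (n - Suc l * c))"
    unfolding of_int_sum
    by (rule sum.cong) (auto simp: G_def of_nat_diff)
  also have "\<dots> = (E (Suc l) k * G m l m) $ n"
    by (rule E_mult[symmetric]) simp
  finally show "G m (Suc l) k $ n = (E (Suc l) k * G m l m) $ n" .
qed
lemma G_0: "G m 0 k = 1"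
proof (rule fps_ext)
  fix n
  have Qe: "Q 0 k m = {[]}" by (auto simp: Q_def)
  show "G m 0 k $ n = 1 $ n"
  proof (cases "n = 0")
    case True
    have "{p\<in>Q 0 k m. sum_list p = n} = {[]}" by (rule set_eqI) (auto simp: Qe True)
    thus ?thesis using True by (simp add: G_def omega_def)
  next
    case False
    have e: "{p\<in>Q 0 k m. sum_list p = n} = {}" by (rule set_eqI) (auto simp: Qe False)
    show ?thesis using False unfolding G_def fps_nth_Abs_fps e by simp
  qed
qed

lemma E_shift: assumes "0 < r" shows "E r k = fps_X ^ (r * k) * E r 0"
proof (rule fps_ext)
  fix n
  show "E r k $ n = (fps_X ^ (r * k) * E r 0) $ n"
  proof (cases "n < r * k")
    case True then show ?thesis by (simp add: fps_X_power_mult_nth E_def)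
  next
    case False
    then obtain d where d: "n = r * k + d" by (metis le_Suc_ex not_less)
    have dv: "r dvd n \<longleftrightarrow> r dvd d" using d by (simp add: dvd_add_right_iff)
    have dd: "n div r = k + d div r" using d assms by simp
    show ?thesis using False d dv dd assms by (simp add: fps_X_power_mult_nth E_def)
  qed
qed



lemma coeff_1_minus_X:
  "((f::rat fps) * (1 - fps_X ^ r)) $ n = f $ n - (if n < r then 0 else f $ (n - r))"
proof -
  have "f * (1 - fps_X ^ r) = f - fps_X ^ r * f" by (simp add: algebra_simps)
  thus ?thesis by (simp add: fps_X_power_mult_nth)
qed

definition h :: "nat \<Rightarrow> rat fps" where
  "h r = Abs_fps (\<lambda>n. if r dvd n then 1 else 0)"

lemma E0_step1: assumes r: "0 < r" shows "E r 0 * (1 - fps_X ^ r) = h r"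
proof (rule fps_ext)
  fix n
  show "(E r 0 * (1 - fps_X ^ r)) $ n = h r $ n"
  proof (cases "n < r")
    case True
    have "r dvd n \<longleftrightarrow> n = 0" using True by (auto dest: dvd_imp_le)
    thus ?thesis using True by (simp add: coeff_1_minus_X E_def h_def)
  next
    case False
    have d: "r dvd (n - r) \<longleftrightarrow> r dvd n" using False by (simp add: dvd_minus_self)
    have q: "n div r = Suc ((n - r) div r)" using False r by (simp add: le_div_geq)
    show ?thesis using False d q by (simp add: coeff_1_minus_X E_def h_def)
  qed
qed

lemma E0_step2: assumes r: "0 < r" shows "h r * (1 - fps_X ^ r) = 1"
proof (rule fps_ext)
  fix n
  show "(h r * (1 - fps_X ^ r)) $ n = 1 $ n"
  proof (cases "n < r")
    case True
    have "r dvd n \<longleftrightarrow> n = 0" using True by (auto dest: dvd_imp_le)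
    thus ?thesis using True by (simp add: coeff_1_minus_X h_def)
  next
    case False
    have d: "r dvd (n - r) \<longleftrightarrow> r dvd n" using False by (simp add: dvd_minus_self)
    show ?thesis using False d r by (simp add: coeff_1_minus_X h_def)
  qed
qed

lemma E0_inv: assumes "0 < r" shows "E r 0 * (1 - fps_X ^ r) ^ 2 = 1"
proof -
  have "E r 0 * (1 - fps_X ^ r) ^ 2 = (E r 0 * (1 - fps_X ^ r)) * (1 - fps_X ^ r)"
    by (simp add: power2_eq_square mult.assoc)
  also have "\<dots> = 1" using assms by (simp add: E0_step1 E0_step2)
  finally show ?thesis .
qed


lemma choose2_Suc: "Suc l choose 2 = l + (l choose 2)"
  by (simp add: numeral_2_eq_2)

lemma G_closed: "G m l k = fps_X ^ (k * l + m * (l choose 2)) * (\<Prod>j<l. E (Suc j) 0)"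
proof (induction l arbitrary: k)
  case 0 then show ?case by (simp add: G_0 binomial_eq_0)
next
  case (Suc l)
  have "G m (Suc l) k = fps_X ^ (Suc l * k) * E (Suc l) 0 *
      (fps_X ^ (m * l + m * (l choose 2)) * (\<Prod>j<l. E (Suc j) 0))"
    by (simp only: G_Suc E_shift[OF zero_less_Suc, of l k] Suc.IH)
  also have "\<dots> = fps_X ^ (k * Suc l + m * (Suc l choose 2)) * (\<Prod>j<Suc l. E (Suc j) 0)"
    by (simp only: choose2_Suc prod.lessThan_Suc power_add distrib_left) (simp add: mult_ac)
  finally show ?case .
qed

lemma prodE: "(\<Prod>j<i. E (Suc j) 0) = inverse (qpoch i ^ 2 :: rat fps)"
proof -
  have "qpoch i ^ 2 * (\<Prod>j<i. E (Suc j) 0) = (\<Prod>j<i. E (Suc j) 0 * (1 - fps_X ^ Suc j) ^ 2)"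
    by (simp add: qpoch_def prod_power_distrib prod.distrib mult.commute)
  also have "\<dots> = 1" by (rule prod.neutral) (intro ballI E0_inv zero_less_Suc)
  finally show ?thesis by (rule fps_inverse_unique[symmetric])
qed

theorem corollary6:
  fixes M k m :: nat
  assumes "k \<ge> 1"
  shows "Abs_fps (\<lambda>n. of_int (\<Sum>p\<in>{p\<in>P_le M k m. sum_list p = n}. omega k m p))
       = (\<Sum>i=0..M. fps_X ^ (m * (i choose 2) + k * i) * inverse ((qpoch i :: rat fps) ^ 2))"
proof -
  have rhs: "(\<Sum>i=0..M. fps_X ^ (m * (i choose 2) + k * i) * inverse ((qpoch i :: rat fps) ^ 2))
      = (\<Sum>i=0..M. G m i k)"
    by (rule sum.cong) (simp_all add: G_closed prodE add.commute)
  show ?thesis unfolding rhs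
  proof (rule fps_ext)
    fix n
    have set: "{p\<in>P_le M k m. sum_list p = n} = (\<Union>i\<in>{0..M}. {p\<in>Q i k m. sum_list p = n})"
      by (auto simp: P_le_def P_set_eq[OF assms])
    have eq: "(\<Sum>p\<in>{p\<in>P_le M k m. sum_list p = n}. omega k m p)
        = (\<Sum>i=0..M. \<Sum>p\<in>{p\<in>Q i k m. sum_list p = n}. omega k m p)"
      unfolding set by (rule sum.UNION_disjoint) (simp_all add: finite_Qn, auto simp: Q_def)
    have "Abs_fps (\<lambda>n. of_int (\<Sum>p\<in>{p\<in>P_le M k m. sum_list p = n}. omega k m p)) $ n
          = of_int (\<Sum>i=0..M. \<Sum>p\<in>{p\<in>Q i k m. sum_list p = n}. omega k m p)"
      by (simp only: fps_nth_Abs_fps eq)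
    also have "\<dots> = (\<Sum>i=0..M. of_int (\<Sum>p\<in>{p\<in>Q i k m. sum_list p = n}. omega k m p))"
      by (rule of_int_sum)
    also have "\<dots> = (\<Sum>i=0..M. G m i k) $ n"
      by (simp only: fps_sum_nth G_def fps_nth_Abs_fps)
    finally show "Abs_fps (\<lambda>n. of_int (\<Sum>p\<in>{p\<in>P_le M k m. sum_list p = n}. omega k m p)) $ n
          = (\<Sum>i=0..M. G m i k) $ n" .
  qed
qed


end
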